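(* Let $p:\mathbb R^{n\times k}\to\mathbb R$ be a polynomial invariant under all permutations of the last $n-1$ rows of $\mathbf X=(\mathbf x_1,\dots,\mathbf x_n)^T$. Then $$p(\mathbf X)=\sum_{\alpha\in\mathbb N^k,\ |\alpha|\le n}\mathbf x_1^\alpha\,q_\alpha(\mathbf X),$$ where each $q_\alpha:\mathbb R^{n\times k}\to\mathbb R$ is a polynomial invariant under all permutations of the rows of $\mathbf X$ (i.e. $S_n$-invariant).
   Context: For $\mathbf x\in\mathbb R^k$ and $\alpha\in\mathbb N^k$, $\mathbf x^\alpha=x_1^{\alpha_1}\cdots x_k^{\alpha_k}$ and $|\alpha|=\sum_i\alpha_i$. $S_n$ acts on $\mathbf X\in\mathbb R^{n\times k}$ by permuting rows. *)

theory Defs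
  imports Complex_Main "HOL-Combinatorics.Permutations"
begin

text \<open>Matrices X in R^(n x k) are modelled as functions nat => nat => real;
  row i (0-based, i < n), column j (j < k). Row 0 is x_1.\<close>

definition monomial_mat :: "nat \<Rightarrow> nat \<Rightarrow> (nat \<Rightarrow> nat \<Rightarrow> nat) \<Rightarrow> (nat \<Rightarrow> nat \<Rightarrow> real) \<Rightarrow> real" where
  "monomial_mat n k A X = (\<Prod>i<n. \<Prod>j<k. X i j ^ A i j)"

definition poly_fun :: "nat \<Rightarrow> nat \<Rightarrow> ((nat \<Rightarrow> nat \<Rightarrow> real) \<Rightarrow> real) \<Rightarrow> bool" where
  "poly_fun n k p \<longleftrightarrow> (\<exists>S c. finite S \<and> (\<forall>X. p X = (\<Sum>A\<in>S. c A * monomial_mat n k A X)))"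

definition permute_rows :: "(nat \<Rightarrow> nat) \<Rightarrow> (nat \<Rightarrow> nat \<Rightarrow> real) \<Rightarrow> (nat \<Rightarrow> nat \<Rightarrow> real)" where
  "permute_rows \<sigma> X = (\<lambda>i j. X (\<sigma> i) j)"

definition row_perm_invariant :: "nat set \<Rightarrow> ((nat \<Rightarrow> nat \<Rightarrow> real) \<Rightarrow> real) \<Rightarrow> bool" where
  "row_perm_invariant R p \<longleftrightarrow> (\<forall>\<sigma> X. \<sigma> permutes R \<longrightarrow> p (permute_rows \<sigma> X) = p X)"

end

theory Submission
  imports Defs
begin


lemma monomial_mat_add:
  "monomial_mat n k A X * monomial_mat n k B X = monomial_mat n k (\<lambda>i j. A i j + B i j) X"
  unfolding monomial_mat_def by (simp add: prod.distrib[symmetric] power_add)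

lemma poly_funI: "finite S \<Longrightarrow> (\<And>X. p X = (\<Sum>A\<in>S. c A * monomial_mat n k A X)) \<Longrightarrow> poly_fun n k p"
  unfolding poly_fun_def by blast

lemma poly_fun_mono: "poly_fun n k (\<lambda>X. a * monomial_mat n k A X)"
  unfolding poly_fun_def by (rule exI[of _ "{A}"], rule exI[of _ "\<lambda>_. a"]) simp

lemma poly_fun_const: "poly_fun n k (\<lambda>X. a)"
  using poly_fun_mono[of n k a "\<lambda>_ _. 0"] by (simp add: monomial_mat_def)

lemma sum_restr: "finite T \<Longrightarrow> S \<subseteq> T \<Longrightarrow> (\<Sum>A\<in>T. (if A \<in> S then c A else 0) * m A) = (\<Sum>A\<in>S. c A * (m A::real))"
proof -
  assume "finite T" "S \<subseteq> T"
  have "(\<Sum>A\<in>T. (if A \<in> S then c A else 0) * m A) = (\<Sum>A\<in>T. if A \<in> S then c A * m A else 0)"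
    by (rule sum.cong) auto
  also have "\<dots> = (\<Sum>A\<in>T \<inter> S. c A * m A)" using \<open>finite T\<close> by (simp add: sum.inter_restrict)
  also have "T \<inter> S = S" using \<open>S \<subseteq> T\<close> by blast
  finally show ?thesis .
qed

lemma poly_fun_add:
  assumes "poly_fun n k f" "poly_fun n k g"
  shows "poly_fun n k (\<lambda>X. f X + g X)"
proof -
  obtain S c where S: "finite S" "\<And>X. f X = (\<Sum>A\<in>S. c A * monomial_mat n k A X)"
    using assms(1) unfolding poly_fun_def by blast
  obtain S' c' where S': "finite S'" "\<And>X. g X = (\<Sum>A\<in>S'. c' A * monomial_mat n k A X)"
    using assms(2) unfolding poly_fun_def by blast
  let ?c = "\<lambda>A. (if A \<in> S then c A else 0) + (if A \<in> S' then c' A else 0)"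
  have "f X + g X = (\<Sum>A\<in>S \<union> S'. ?c A * monomial_mat n k A X)" for X
  proof -
    have "(\<Sum>A\<in>S \<union> S'. ?c A * monomial_mat n k A X) =
      (\<Sum>A\<in>S \<union> S'. (if A \<in> S then c A else 0) * monomial_mat n k A X) +
      (\<Sum>A\<in>S \<union> S'. (if A \<in> S' then c' A else 0) * monomial_mat n k A X)"
      by (simp only: distrib_right sum.distrib)
    also have "\<dots> = f X + g X"
      using S S' by (simp only: sum_restr finite_UnI Un_upper1 Un_upper2)
    finally show ?thesis by simp
  qed
  then show ?thesis using S S' by (intro poly_funI[of "S \<union> S'" _ ?c]) auto
qed

lemma poly_fun_smul:
  assumes "poly_fun n k f" shows "poly_fun n k (\<lambda>X. a * f X)"
proof -
  obtain S c where S: "finite S" "\<And>X. f X = (\<Sum>A\<in>S. c A * monomial_mat n k A X)"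
    using assms(1) unfolding poly_fun_def by blast
  have "a * f X = (\<Sum>A\<in>S. (a * c A) * monomial_mat n k A X)" for X
    using S by (simp add: sum_distrib_left mult.assoc)
  then show ?thesis using S by (intro poly_funI[of S _ "\<lambda>A. a * c A"]) auto
qed

lemma poly_fun_sum:
  assumes "finite I" "\<And>i. i \<in> I \<Longrightarrow> poly_fun n k (f i)"
  shows "poly_fun n k (\<lambda>X. \<Sum>i\<in>I. f i X)"
  using assms
proof (induction I rule: finite_induct)
  case empty then show ?case using poly_fun_const[of n k 0] by simp
next
  case (insert x F) then show ?case using poly_fun_add[of n k "f x" "\<lambda>X. \<Sum>i\<in>F. f i X"] by simp
qed

lemma poly_fun_mul:
  assumes "poly_fun n k f" "poly_fun n k g"
  shows "poly_fun n k (\<lambda>X. f X * g X)"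
proof -
  obtain S c where S: "finite S" "\<And>X. f X = (\<Sum>A\<in>S. c A * monomial_mat n k A X)"
    using assms(1) unfolding poly_fun_def by blast
  obtain S' c' where S': "finite S'" "\<And>X. g X = (\<Sum>A\<in>S'. c' A * monomial_mat n k A X)"
    using assms(2) unfolding poly_fun_def by blast
  have e: "f X * g X = (\<Sum>A\<in>S. \<Sum>B\<in>S'. (c A * c' B) * monomial_mat n k (\<lambda>i j. A i j + B i j) X)" for X
    by (simp add: S S' sum_distrib_left sum_distrib_right monomial_mat_add[symmetric] algebra_simps)
  have "poly_fun n k (\<lambda>X. \<Sum>A\<in>S. \<Sum>B\<in>S'. (c A * c' B) * monomial_mat n k (\<lambda>i j. A i j + B i j) X)"
    by (intro poly_fun_sum S S' poly_fun_mono)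
  then show ?thesis by (simp add: e)
qed

lemma poly_fun_prod:
  assumes "finite I" "\<And>i. i \<in> I \<Longrightarrow> poly_fun n k (f i)"
  shows "poly_fun n k (\<lambda>X. \<Prod>i\<in>I. f i X)"
  using assms
proof (induction I rule: finite_induct)
  case empty then show ?case using poly_fun_const[of n k 1] by simp
next
  case (insert x F) then show ?case using poly_fun_mul[of n k "f x" "\<lambda>X. \<Prod>i\<in>F. f i X"] by simp
qed

lemma poly_fun_var:
  assumes "i < n" "j < k" shows "poly_fun n k (\<lambda>X. X i j)"
proof -
  have "monomial_mat n k (\<lambda>i' j'. if i' = i \<and> j' = j then 1 else 0) X = X i j" for X
  proof -
    have "monomial_mat n k (\<lambda>i' j'. if i' = i \<and> j' = j then 1 else 0) X
       = (\<Prod>i'<n. \<Prod>j'<k. if i' = i \<and> j' = j then X i' j' else 1)"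
      unfolding monomial_mat_def by (intro prod.cong) auto
    also have "\<dots> = (\<Prod>i'<n. if i' = i then X i j else 1)"
      using assms by (intro prod.cong) (auto simp: prod.delta)
    also have "\<dots> = X i j" using assms by (simp add: prod.delta)
    finally show ?thesis .
  qed
  then show ?thesis using poly_fun_mono[of n k 1 "\<lambda>i' j'. if i' = i \<and> j' = j then 1 else 0"] by simp
qed

lemma poly_fun_power:
  assumes "poly_fun n k f" shows "poly_fun n k (\<lambda>X. f X ^ m)"
  using poly_fun_prod[of "{..<m}" n k "\<lambda>_. f"] assms by simp



definition sympol :: "nat \<Rightarrow> nat \<Rightarrow> ((nat \<Rightarrow> nat \<Rightarrow> real) \<Rightarrow> real) \<Rightarrow> bool" where
  "sympol n k s \<longleftrightarrow> poly_fun n k s \<and> row_perm_invariant {..<n} s"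

definition Bnd :: "nat \<Rightarrow> nat \<Rightarrow> (nat \<Rightarrow> nat) set" where
  "Bnd n k = {\<alpha>. (\<forall>j\<ge>k. \<alpha> j = 0) \<and> (\<Sum>j<k. \<alpha> j) \<le> n}"

definition Wset :: "nat \<Rightarrow> nat \<Rightarrow> ((nat \<Rightarrow> nat \<Rightarrow> real) \<Rightarrow> real) set" where
  "Wset n k = {f. \<exists>q. (\<forall>\<alpha>. sympol n k (q \<alpha>)) \<and>
       (\<forall>X. f X = (\<Sum>\<alpha>\<in>Bnd n k. (\<Prod>j<k. X 0 j ^ \<alpha> j) * q \<alpha> X))}"

lemma sympol_const: "sympol n k (\<lambda>X. a)"
  by (simp add: sympol_def poly_fun_const row_perm_invariant_def)

lemma sympol_add: assumes "sympol n k f" "sympol n k g" shows "sympol n k (\<lambda>X. f X + g X)"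
proof -
  have "poly_fun n k (\<lambda>X. f X + g X)" using assms unfolding sympol_def by (intro poly_fun_add) auto
  moreover have "row_perm_invariant {..<n} (\<lambda>X. f X + g X)"
    using assms unfolding sympol_def row_perm_invariant_def by simp
  ultimately show ?thesis unfolding sympol_def by blast
qed

lemma sympol_mul: assumes "sympol n k f" "sympol n k g" shows "sympol n k (\<lambda>X. f X * g X)"
proof -
  have "poly_fun n k (\<lambda>X. f X * g X)" using assms unfolding sympol_def by (intro poly_fun_mul) auto
  moreover have "row_perm_invariant {..<n} (\<lambda>X. f X * g X)"
    using assms unfolding sympol_def row_perm_invariant_def by simp
  ultimately show ?thesis unfolding sympol_def by blast
qed

lemma finite_Bnd: "finite (Bnd n k)"
proof -
  have "Bnd n k \<subseteq> (\<lambda>f j. if j < k then f j else 0) ` PiE {..<k} (\<lambda>_. {..n})"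
  proof
    fix \<alpha> assume a: "\<alpha> \<in> Bnd n k"
    have le: "\<alpha> j \<le> n" if "j < k" for j
    proof -
      have "\<alpha> j \<le> (\<Sum>j<k. \<alpha> j)" using that by (intro member_le_sum) auto
      then show ?thesis using a by (simp add: Bnd_def)
    qed
    have "\<alpha> = (\<lambda>j. if j < k then restrict \<alpha> {..<k} j else 0)"
      using a by (auto simp: Bnd_def fun_eq_iff)
    moreover have "restrict \<alpha> {..<k} \<in> PiE {..<k} (\<lambda>_. {..n})" using le by auto
    ultimately show "\<alpha> \<in> (\<lambda>f j. if j < k then f j else 0) ` PiE {..<k} (\<lambda>_. {..n})" by blast
  qed
  then show ?thesis by (rule finite_subset) (intro finite_imageI finite_PiE, auto)
qed

lemma W_add: assumes "f \<in> Wset n k" "g \<in> Wset n k" shows "(\<lambda>X. f X + g X) \<in> Wset n k"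
proof -
  obtain q where q: "\<forall>\<alpha>. sympol n k (q \<alpha>)" "\<forall>X. f X = (\<Sum>\<alpha>\<in>Bnd n k. (\<Prod>j<k. X 0 j ^ \<alpha> j) * q \<alpha> X)"
    using assms(1) unfolding Wset_def by blast
  obtain q' where q': "\<forall>\<alpha>. sympol n k (q' \<alpha>)" "\<forall>X. g X = (\<Sum>\<alpha>\<in>Bnd n k. (\<Prod>j<k. X 0 j ^ \<alpha> j) * q' \<alpha> X)"
    using assms(2) unfolding Wset_def by blast
  show ?thesis unfolding Wset_def
    apply (rule CollectI, rule exI[of _ "\<lambda>\<alpha> X. q \<alpha> X + q' \<alpha> X"])
  proof (intro conjI allI)
    fix \<alpha> show "sympol n k (\<lambda>X. q \<alpha> X + q' \<alpha> X)" using q(1) q'(1) by (intro sympol_add) auto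
  next
    fix X show "f X + g X = (\<Sum>\<alpha>\<in>Bnd n k. (\<Prod>j<k. X 0 j ^ \<alpha> j) * (q \<alpha> X + q' \<alpha> X))"
      using q(2) q'(2) by (simp add: distrib_left sum.distrib)
  qed
qed

lemma W_smul: assumes "f \<in> Wset n k" "sympol n k s" shows "(\<lambda>X. s X * f X) \<in> Wset n k"
proof -
  obtain q where q: "\<forall>\<alpha>. sympol n k (q \<alpha>)" "\<forall>X. f X = (\<Sum>\<alpha>\<in>Bnd n k. (\<Prod>j<k. X 0 j ^ \<alpha> j) * q \<alpha> X)"
    using assms(1) unfolding Wset_def by blast
  show ?thesis unfolding Wset_def
    apply (rule CollectI, rule exI[of _ "\<lambda>\<alpha> X. s X * q \<alpha> X"])
  proof (intro conjI allI)
    fix \<alpha> show "sympol n k (\<lambda>X. s X * q \<alpha> X)" using q(1) assms(2) by (intro sympol_mul) auto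
  next
    fix X show "s X * f X = (\<Sum>\<alpha>\<in>Bnd n k. (\<Prod>j<k. X 0 j ^ \<alpha> j) * (s X * q \<alpha> X))"
      using q(2) by (simp add: sum_distrib_left mult.left_commute)
  qed
qed

lemma W_zero: "(\<lambda>X. 0) \<in> Wset n k"
  unfolding Wset_def by (rule CollectI, rule exI[of _ "\<lambda>\<alpha> X. 0"]) (simp add: sympol_const)

lemma W_term: assumes "\<beta> \<in> Bnd n k" "sympol n k s"
  shows "(\<lambda>X. (\<Prod>j<k. X 0 j ^ \<beta> j) * s X) \<in> Wset n k"
proof -
  have "(\<Sum>\<alpha>\<in>Bnd n k. (\<Prod>j<k. X 0 j ^ \<alpha> j) * (if \<alpha> = \<beta> then s X else 0)) = (\<Prod>j<k. X 0 j ^ \<beta> j) * s X" for X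
  proof -
    have "(\<Sum>\<alpha>\<in>Bnd n k. (\<Prod>j<k. X 0 j ^ \<alpha> j) * (if \<alpha> = \<beta> then s X else 0))
      = (\<Sum>\<alpha>\<in>Bnd n k. if \<alpha> = \<beta> then (\<Prod>j<k. X 0 j ^ \<beta> j) * s X else 0)"
      by (rule sum.cong) auto
    also have "\<dots> = (\<Prod>j<k. X 0 j ^ \<beta> j) * s X" using assms(1) finite_Bnd by (simp add: sum.delta')
    finally show ?thesis .
  qed
  moreover have "\<forall>\<alpha>. sympol n k (\<lambda>X. if \<alpha> = \<beta> then s X else 0)"
  proof
    fix \<alpha> show "sympol n k (\<lambda>X. if \<alpha> = \<beta> then s X else 0)"
      using assms(2) sympol_const[of n k 0] by (cases "\<alpha> = \<beta>") auto
  qed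
  ultimately show ?thesis unfolding Wset_def
    by (intro CollectI exI[of _ "\<lambda>\<alpha> X. if \<alpha> = \<beta> then s X else 0"]) auto
qed

lemma W_sym: assumes "sympol n k s" shows "s \<in> Wset n k"
  using W_term[of "\<lambda>_. 0" n k s] assms by (simp add: Bnd_def)

lemma W_sum: assumes "finite I" "\<And>i. i \<in> I \<Longrightarrow> f i \<in> Wset n k"
  shows "(\<lambda>X. \<Sum>i\<in>I. f i X) \<in> Wset n k"
  using assms
proof (induction I rule: finite_induct)
  case empty then show ?case using W_zero by simp
next
  case (insert x F) then show ?case using W_add[of "f x" n k "\<lambda>X. \<Sum>i\<in>F. f i X"] by simp
qed



definition Qf :: "nat \<Rightarrow> (nat \<Rightarrow> nat) \<Rightarrow> nat set \<Rightarrow> (nat \<Rightarrow> nat \<Rightarrow> real) \<Rightarrow> real" where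
  "Qf n c S X = (\<Sum>\<tau>\<in>{\<tau>. \<tau> permutes {..<n}}. \<Prod>t\<in>S. - X (\<tau> t) (c t))"

lemma Qf_empty: "Qf n c {} X = fact n"
  by (simp add: Qf_def card_permutations)

lemma ID:
  assumes "n \<ge> 1"
  shows "fact n * (\<Prod>t<n. X 0 (c t)) = - (\<Sum>S\<in>Pow {..<n} - {{}}. Qf n c S X * (\<Prod>t\<in>{..<n}-S. X 0 (c t)))"
proof -
  let ?P = "{\<tau>. \<tau> permutes {..<n}}"
  have z: "(\<Prod>t<n. (- X (\<tau> t) (c t)) + X 0 (c t)) = 0" if "\<tau> \<in> ?P" for \<tau>
  proof -
    have p: "\<tau> permutes {..<n}" using that by simp
    have "inv \<tau> 0 < n" using permutes_in_image[OF permutes_inv[OF p]] assms by simp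
    moreover have "\<tau> (inv \<tau> 0) = 0" using permutes_inverses(1)[OF p] by simp
    ultimately show ?thesis by (intro prod_zero) (auto intro!: bexI[of _ "inv \<tau> 0"])
  qed
  have "(\<Sum>\<tau>\<in>?P. \<Prod>t<n. (- X (\<tau> t) (c t)) + X 0 (c t)) = 0"
    by (rule sum.neutral) (use z in blast)
  then have "0 = (\<Sum>\<tau>\<in>?P. \<Prod>t<n. (- X (\<tau> t) (c t)) + X 0 (c t))" by (rule sym)
  also have "\<dots> = (\<Sum>\<tau>\<in>?P. \<Sum>S\<in>Pow {..<n}. (\<Prod>t\<in>S. - X (\<tau> t) (c t)) * (\<Prod>t\<in>{..<n}-S. X 0 (c t)))"
    by (intro sum.cong refl prod_add) simp
  also have "\<dots> = (\<Sum>S\<in>Pow {..<n}. \<Sum>\<tau>\<in>?P. (\<Prod>t\<in>S. - X (\<tau> t) (c t)) * (\<Prod>t\<in>{..<n}-S. X 0 (c t)))"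
    by (rule sum.swap)
  also have "\<dots> = (\<Sum>S\<in>Pow {..<n}. Qf n c S X * (\<Prod>t\<in>{..<n}-S. X 0 (c t)))"
    unfolding Qf_def by (simp add: sum_distrib_right)
  also have "\<dots> = Qf n c {} X * (\<Prod>t\<in>{..<n}-{}. X 0 (c t)) + (\<Sum>S\<in>Pow {..<n} - {{}}. Qf n c S X * (\<Prod>t\<in>{..<n}-S. X 0 (c t)))"
    by (rule sum.remove) auto
  finally show ?thesis by (simp add: Qf_empty)
qed

lemma Qf_inv: "row_perm_invariant {..<n} (Qf n c S)"
  unfolding row_perm_invariant_def
proof (intro allI impI)
  fix \<sigma> and X :: "nat \<Rightarrow> nat \<Rightarrow> real" assume s: "\<sigma> permutes {..<n}"
  let ?F = "\<lambda>\<tau>. \<Prod>t\<in>S. - X (\<tau> t) (c t)"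
  have "Qf n c S X = (\<Sum>\<tau>\<in>{\<tau>. \<tau> permutes {..<n}}. ?F (\<sigma> \<circ> \<tau>))"
    unfolding Qf_def by (rule setum_permutations_compose_left[OF s])
  then show "Qf n c S (permute_rows \<sigma> X) = Qf n c S X"
    by (simp add: Qf_def permute_rows_def)
qed

lemma Qf_poly: assumes "S \<subseteq> {..<n}" "\<forall>t\<in>S. c t < k" shows "poly_fun n k (Qf n c S)"
proof -
  have fS: "finite S" using assms(1) finite_subset by blast
  have "poly_fun n k (\<lambda>X. \<Sum>\<tau>\<in>{\<tau>. \<tau> permutes {..<n}}. \<Prod>t\<in>S. -1 * X (\<tau> t) (c t))"
  proof (rule poly_fun_sum)
    show "finite {\<tau>. \<tau> permutes {..<n}}" by (simp add: finite_permutations)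
    fix \<tau> assume "\<tau> \<in> {\<tau>. \<tau> permutes {..<n}}"
    then have p: "\<tau> permutes {..<n}" by simp
    show "poly_fun n k (\<lambda>X. \<Prod>t\<in>S. -1 * X (\<tau> t) (c t))"
    proof (rule poly_fun_prod[OF fS])
      fix t assume t: "t \<in> S"
      have "\<tau> t < n" using t assms(1) permutes_in_image[OF p, of t] by auto
      moreover have "c t < k" using t assms(2) by auto
      ultimately show "poly_fun n k (\<lambda>X. -1 * X (\<tau> t) (c t))"
        by (intro poly_fun_smul[of n k "\<lambda>X. X (\<tau> t) (c t)"] poly_fun_var)
    qed
  qed
  then show ?thesis unfolding Qf_def[abs_def] by simp
qed

lemma Qf_sympol: "S \<subseteq> {..<n} \<Longrightarrow> \<forall>t\<in>S. c t < k \<Longrightarrow> sympol n k (Qf n c S)"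
  unfolding sympol_def using Qf_poly[of S n c k] Qf_inv[of n c S] by simp

lemma count_facts:
  fixes c :: "'a \<Rightarrow> nat" and r :: "nat \<Rightarrow> real"
  assumes "finite A" "\<forall>t\<in>A. c t < k"
  shows "(\<Prod>t\<in>A. r (c t)) = (\<Prod>j<k. r j ^ card {t\<in>A. c t = j}) \<and> (\<Sum>j<k. card {t\<in>A. c t = j}) = card A"
  using assms
proof (induction A rule: finite_induct)
  case empty then show ?case by simp
next
  case (insert a A)
  have ca: "c a < k" using insert by simp
  have cd: "card {t\<in>insert a A. c t = j} = card {t\<in>A. c t = j} + (if c a = j then 1 else 0)" for j
  proof (cases "c a = j")
    case True
    then have "{t\<in>insert a A. c t = j} = insert a {t\<in>A. c t = j}" by auto
    then show ?thesis using True insert(1,2) by simp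
  next
    case False
    then have "{t\<in>insert a A. c t = j} = {t\<in>A. c t = j}" by auto
    then show ?thesis using False by simp
  qed
  have p: "(\<Prod>j<k. r j ^ card {t\<in>insert a A. c t = j}) = (\<Prod>j<k. r j ^ card {t\<in>A. c t = j}) * (\<Prod>j<k. if c a = j then r j else 1)"
  proof -
    have "r j ^ card {t\<in>insert a A. c t = j} = r j ^ card {t\<in>A. c t = j} * (if c a = j then r j else 1)" for j
      by (simp only: cd power_add) simp
    then show ?thesis by (simp only: prod.distrib)
  qed
  have s: "(\<Sum>j<k. card {t\<in>insert a A. c t = j}) = (\<Sum>j<k. card {t\<in>A. c t = j}) + (\<Sum>j<k. if c a = j then 1 else 0)"
    by (simp only: cd sum.distrib)
  have "(\<Prod>j<k. if c a = j then r j else 1) = r (c a)" using ca by (simp add: prod.delta)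
  moreover have "(\<Sum>j<k. if c a = j then 1 else 0) = (1::nat)" using ca by (simp add: sum.delta)
  ultimately show ?case unfolding p s using insert by simp
qed

lemma Rpp:
  fixes c :: "'a \<Rightarrow> nat"
  assumes "n \<ge> 1" "finite A" "\<forall>t\<in>A. c t < k"
  shows "(\<lambda>X. \<Prod>t\<in>A. X 0 (c t)) \<in> Wset n k"
  using assms(2,3)
proof (induction "card A" arbitrary: A rule: less_induct)
  case less
  show ?case
  proof (cases "card A \<le> n")
    case True
    let ?\<beta> = "\<lambda>j. card {t\<in>A. c t = j}"
    have cf: "(\<Prod>t\<in>A. X 0 (c t)) = (\<Prod>j<k. X 0 j ^ ?\<beta> j)" "(\<Sum>j<k. ?\<beta> j) = card A" for X :: "nat \<Rightarrow> nat \<Rightarrow> real"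
      using count_facts[OF less(2,3), of "X 0"] by auto
    have "?\<beta> \<in> Bnd n k"
    proof -
      have "card {t\<in>A. c t = j} = 0" if "j \<ge> k" for j
      proof -
        have "{t\<in>A. c t = j} = {}" using that less(3) by auto
        then show ?thesis by (simp only: card.empty)
      qed
      then show ?thesis unfolding Bnd_def using cf(2) True by simp
    qed
    from W_term[OF this sympol_const[of n k 1]] show ?thesis by (simp add: cf(1))
  next
    case False
    then obtain B where B: "B \<subseteq> A" "card B = n" "finite B"
      by (meson nat_le_linear obtain_subset_with_card_n)
    obtain e where e: "bij_betw e {..<n} B"
      using ex_bij_betw_nat_finite[OF B(3)] B(2) by (auto simp: lessThan_atLeast0)
    define c' where "c' = c \<circ> e"
    have eB: "e t \<in> B" if "t < n" for t using e that bij_betwE by blast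
    have c'k: "\<forall>t\<in>S. c' t < k" if "S \<subseteq> {..<n}" for S
      using that eB B(1) less(3) unfolding c'_def by auto
    have inj: "inj_on e {..<n}" using e bij_betw_imp_inj_on by blast
    have key: "(\<Prod>t\<in>A. X 0 (c t)) = (- 1 / fact n) *
        (\<Sum>S\<in>Pow {..<n} - {{}}. Qf n c' S X * (\<Prod>t\<in>A - e ` S. X 0 (c t)))" for X :: "nat \<Rightarrow> nat \<Rightarrow> real"
    proof -
      have s1: "(\<Prod>t\<in>A. X 0 (c t)) = (\<Prod>t\<in>A - B. X 0 (c t)) * (\<Prod>t\<in>B. X 0 (c t))"
        using B less(2) by (simp add: prod.subset_diff)
      have s2: "(\<Prod>t\<in>B. X 0 (c t)) = (\<Prod>t<n. X 0 (c' t))"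
        unfolding c'_def using prod.reindex_bij_betw[OF e, of "\<lambda>t. X 0 (c t)"] by simp
      have s3: "(\<Prod>t\<in>{..<n}-S. X 0 (c' t)) * (\<Prod>t\<in>A - B. X 0 (c t)) = (\<Prod>t\<in>A - e ` S. X 0 (c t))"
        if "S \<subseteq> {..<n}" for S
      proof -
        have "(\<Prod>t\<in>{..<n}-S. X 0 (c' t)) = (\<Prod>t\<in>e ` ({..<n}-S). X 0 (c t))"
          unfolding c'_def using prod.reindex[of e "{..<n}-S" "\<lambda>t. X 0 (c t)"] inj_on_subset[OF inj]
          by auto
        moreover have "e ` ({..<n}-S) \<union> (A - B) = A - e ` S"
          using that B(1) inj e by (auto simp: bij_betw_def inj_on_def) 
        moreover have "e ` ({..<n}-S) \<inter> (A - B) = {}" using eB by auto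
        moreover have "finite (A - B)" using less(2) by simp
        ultimately show ?thesis by (simp add: prod.union_disjoint[symmetric])
      qed
      have "fact n * (\<Prod>t\<in>A. X 0 (c t)) = (fact n * (\<Prod>t<n. X 0 (c' t))) * (\<Prod>t\<in>A - B. X 0 (c t))"
        by (simp add: s1 s2)
      also have "\<dots> = - (\<Sum>S\<in>Pow {..<n} - {{}}. Qf n c' S X * ((\<Prod>t\<in>{..<n}-S. X 0 (c' t)) * (\<Prod>t\<in>A - B. X 0 (c t))))"
        by (simp add: ID[OF assms(1)] sum_distrib_right mult.assoc)
      also have "\<dots> = - (\<Sum>S\<in>Pow {..<n} - {{}}. Qf n c' S X * (\<Prod>t\<in>A - e ` S. X 0 (c t)))"
        by (intro arg_cong[where f = uminus] sum.cong refl) (simp add: s3)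
      finally show ?thesis by (simp add: field_simps)
    qed
    have "(\<lambda>X. (- 1 / fact n) * (\<Sum>S\<in>Pow {..<n} - {{}}. Qf n c' S X * (\<Prod>t\<in>A - e ` S. X 0 (c t)))) \<in> Wset n k"
    proof (intro W_smul[OF _ sympol_const] W_sum)
      fix S assume S: "S \<in> Pow {..<n} - {{}}"
      have "card (A - e ` S) < card A"
      proof (rule psubset_card_mono[OF less(2)])
        have "e ` S \<subseteq> A" "e ` S \<noteq> {}" using S eB B(1) by auto
        then show "A - e ` S \<subset> A" by blast
      qed
      then have "(\<lambda>X. \<Prod>t\<in>A - e ` S. X 0 (c t)) \<in> Wset n k"
        using less by auto
      then show "(\<lambda>X. Qf n c' S X * (\<Prod>t\<in>A - e ` S. X 0 (c t))) \<in> Wset n k"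
        using S c'k by (intro W_smul Qf_sympol) auto
    qed simp
    then show ?thesis using key by simp
  qed
qed



definition rowmon :: "nat \<Rightarrow> (nat \<Rightarrow> nat) \<Rightarrow> (nat \<Rightarrow> real) \<Rightarrow> real" where
  "rowmon k \<beta> r = (\<Prod>j<k. r j ^ \<beta> j)"

lemma rowmon_add: "rowmon k (\<lambda>j. a j + b j) r = rowmon k a r * rowmon k b r"
  unfolding rowmon_def by (simp add: power_add prod.distrib)

lemma rowmon_zero: "rowmon k (\<lambda>_. 0) r = 1"
  unfolding rowmon_def by simp

lemma rowmon_unit: "j < k \<Longrightarrow> rowmon k (\<lambda>j'. if j' = j then 1 else 0) r = r j"
proof -
  assume j: "j < k"
  have "rowmon k (\<lambda>j'. if j' = j then 1 else 0) r = (\<Prod>j'<k. if j' = j then r j else 1)"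
    unfolding rowmon_def by (intro prod.cong) auto
  also have "\<dots> = r j" using j by (simp add: prod.delta)
  finally show ?thesis .
qed

inductive_set Alg :: "nat \<Rightarrow> nat \<Rightarrow> nat set \<Rightarrow> ((nat \<Rightarrow> nat \<Rightarrow> real) \<Rightarrow> real) set"
  for n k D where
  Alg_sym: "sympol n k s \<Longrightarrow> s \<in> Alg n k D"
| Alg_var: "i \<in> D \<Longrightarrow> j < k \<Longrightarrow> (\<lambda>X. X i j) \<in> Alg n k D"
| Alg_add: "f \<in> Alg n k D \<Longrightarrow> g \<in> Alg n k D \<Longrightarrow> (\<lambda>X. f X + g X) \<in> Alg n k D"
| Alg_mul: "f \<in> Alg n k D \<Longrightarrow> g \<in> Alg n k D \<Longrightarrow> (\<lambda>X. f X * g X) \<in> Alg n k D"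

lemma Alg_const: "(\<lambda>X. a) \<in> Alg n k D"
  by (rule Alg_sym[OF sympol_const])

lemma Alg_sum: assumes "finite I" "\<And>i. i \<in> I \<Longrightarrow> f i \<in> Alg n k D"
  shows "(\<lambda>X. \<Sum>i\<in>I. f i X) \<in> Alg n k D"
  using assms
proof (induction I rule: finite_induct)
  case empty then show ?case using Alg_const[of 0] by simp
next
  case (insert x F) then show ?case using Alg_add[of "f x" n k D "\<lambda>X. \<Sum>i\<in>F. f i X"] by simp
qed

lemma Alg_prod: assumes "finite I" "\<And>i. i \<in> I \<Longrightarrow> f i \<in> Alg n k D"
  shows "(\<lambda>X. \<Prod>i\<in>I. f i X) \<in> Alg n k D"
  using assms
proof (induction I rule: finite_induct)
  case empty then show ?case using Alg_const[of 1] by simp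
next
  case (insert x F) then show ?case using Alg_mul[of "f x" n k D "\<lambda>X. \<Prod>i\<in>F. f i X"] by simp
qed

lemma Alg_power: "f \<in> Alg n k D \<Longrightarrow> (\<lambda>X. f X ^ m) \<in> Alg n k D"
  using Alg_prod[of "{..<m}" "\<lambda>_. f"] by simp

lemma Alg_sum_list: "(\<And>x. x \<in> set L \<Longrightarrow> F x \<in> Alg n k D) \<Longrightarrow> (\<lambda>X. \<Sum>x\<leftarrow>L. F x X) \<in> Alg n k D"
proof (induction L)
  case Nil then show ?case using Alg_const[of 0] by simp
next
  case (Cons a L) then show ?case using Alg_add[of "F a" n k D "\<lambda>X. \<Sum>x\<leftarrow>L. F x X"] by simp
qed

lemma Alg_rowmon: "i \<in> D \<Longrightarrow> (\<lambda>X. rowmon k \<beta> (X i)) \<in> Alg n k D"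
  unfolding rowmon_def by (intro Alg_prod Alg_power Alg_var) auto

lemma Alg_poly: "f \<in> Alg n k D \<Longrightarrow> D \<subseteq> {..<n} \<Longrightarrow> poly_fun n k f"
proof (induction rule: Alg.induct)
  case (Alg_sym s) then show ?case by (simp add: sympol_def)
next
  case (Alg_var i j) then show ?case by (intro poly_fun_var) auto
next
  case (Alg_add f g) then show ?case by (intro poly_fun_add) auto
next
  case (Alg_mul f g) then show ?case by (intro poly_fun_mul) auto
qed

lemma Alg_inv: "f \<in> Alg n k D \<Longrightarrow> \<sigma> permutes {..<n} \<Longrightarrow> (\<forall>i\<in>D. \<sigma> i = i) \<Longrightarrow> f (permute_rows \<sigma> X) = f X"
proof (induction rule: Alg.induct)
  case (Alg_sym s) then show ?case by (simp add: sympol_def row_perm_invariant_def)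
next
  case (Alg_var i j) then show ?case by (simp add: permute_rows_def)
next
  case (Alg_add f g) then show ?case by simp
next
  case (Alg_mul f g) then show ?case by simp
qed

lemma sum_list_mult_both:
  "(\<Sum>x\<leftarrow>L1. a x) * (\<Sum>y\<leftarrow>L2. b y) = (\<Sum>z\<leftarrow>concat (map (\<lambda>x. map (\<lambda>y. (x, y)) L2) L1). a (fst z) * (b (snd z) :: real))"
  by (induction L1) (simp_all add: distrib_right sum_list_const_mult o_def)

lemma NF:
  assumes "f \<in> Alg n k (insert d D)"
  shows "\<exists>L. (\<forall>x\<in>set L. snd x \<in> Alg n k D) \<and> (\<forall>X. f X = (\<Sum>x\<leftarrow>L. rowmon k (fst x) (X d) * snd x X))"
  using assms
proof (induction rule: Alg.induct)
  case (Alg_sym s)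
  show ?case
    by (rule exI[of _ "[(\<lambda>_. 0, s)]"]) (simp add: rowmon_zero Alg.Alg_sym[OF Alg_sym])
next
  case (Alg_var i j)
  show ?case
  proof (cases "i = d")
    case True
    show ?thesis
      by (rule exI[of _ "[(\<lambda>j'. if j' = j then 1 else 0, \<lambda>_. 1)]"])
         (simp add: rowmon_unit Alg_var True Alg_const)
  next
    case False
    then have "i \<in> D" using Alg_var by simp
    then show ?thesis
      by (intro exI[of _ "[(\<lambda>_. 0, \<lambda>X. X i j)]"]) (simp add: rowmon_zero Alg.Alg_var Alg_var)
  qed
next
  case (Alg_add f g)
  then obtain L1 L2 where L1: "\<forall>x\<in>set L1. snd x \<in> Alg n k D" "\<forall>X. f X = (\<Sum>x\<leftarrow>L1. rowmon k (fst x) (X d) * snd x X)"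
    and L2: "\<forall>x\<in>set L2. snd x \<in> Alg n k D" "\<forall>X. g X = (\<Sum>x\<leftarrow>L2. rowmon k (fst x) (X d) * snd x X)"
    by blast
  show ?case by (rule exI[of _ "L1 @ L2"]) (use L1 L2 in auto)
next
  case (Alg_mul f g)
  then obtain L1 L2 where L1: "\<forall>x\<in>set L1. snd x \<in> Alg n k D" "\<forall>X. f X = (\<Sum>x\<leftarrow>L1. rowmon k (fst x) (X d) * snd x X)"
    and L2: "\<forall>x\<in>set L2. snd x \<in> Alg n k D" "\<forall>X. g X = (\<Sum>x\<leftarrow>L2. rowmon k (fst x) (X d) * snd x X)"
    by blast
  let ?Z = "concat (map (\<lambda>x. map (\<lambda>y. (x, y)) L2) L1)"
  let ?L = "map (\<lambda>z. (\<lambda>j. fst (fst z) j + fst (snd z) j, \<lambda>X. snd (fst z) X * snd (snd z) X)) ?Z"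
  have "\<forall>x\<in>set ?L. snd x \<in> Alg n k D"
    using L1(1) L2(1) by (auto intro: Alg.Alg_mul)
  moreover have "f X * g X = (\<Sum>x\<leftarrow>?L. rowmon k (fst x) (X d) * snd x X)" for X
  proof -
    have "f X * g X = (\<Sum>z\<leftarrow>?Z. (rowmon k (fst (fst z)) (X d) * snd (fst z) X) * (rowmon k (fst (snd z)) (X d) * snd (snd z) X))"
      unfolding L1(2)[rule_format] L2(2)[rule_format] by (rule sum_list_mult_both)
    also have "\<dots> = (\<Sum>x\<leftarrow>?L. rowmon k (fst x) (X d) * snd x X)"
      by (simp add: o_def rowmon_add mult_ac)
    finally show ?thesis .
  qed
  ultimately show ?case by blast
qed



lemma sum_list_sum_swap:
  "(\<Sum>u\<in>U. \<Sum>x\<leftarrow>L. F u x) = (\<Sum>x\<leftarrow>L. \<Sum>u\<in>U. (F u x :: real))"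
  by (induction L) (simp_all add: sum.distrib)

lemma powsum_sympol: "sympol n k (\<lambda>X. \<Sum>u<n. rowmon k \<beta> (X u))"
proof -
  have "poly_fun n k (\<lambda>X. \<Sum>u<n. rowmon k \<beta> (X u))"
    unfolding rowmon_def by (intro poly_fun_sum poly_fun_prod poly_fun_power poly_fun_var) auto
  moreover have "row_perm_invariant {..<n} (\<lambda>X. \<Sum>u<n. rowmon k \<beta> (X u))"
    unfolding row_perm_invariant_def
  proof (intro allI impI)
    fix \<sigma> and X :: "nat \<Rightarrow> nat \<Rightarrow> real" assume s: "\<sigma> permutes {..<n}"
    have "(\<Sum>u<n. rowmon k \<beta> (X u)) = (\<Sum>u<n. ((\<lambda>u. rowmon k \<beta> (X u)) \<circ> \<sigma>) u)"
      by (rule sum.permute[OF s])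
    then show "(\<Sum>u<n. rowmon k \<beta> (permute_rows \<sigma> X u)) = (\<Sum>u<n. rowmon k \<beta> (X u))"
      by (simp add: permute_rows_def o_def)
  qed
  ultimately show ?thesis by (simp add: sympol_def)
qed

lemma Alg_step:
  assumes "d < n" "d \<notin> D" "D \<subseteq> {..<n}" "f \<in> Alg n k (insert d D)"
    and inv: "\<And>u X. u \<in> {..<n} - D \<Longrightarrow> f (permute_rows (transpose d u) X) = f X"
  shows "f \<in> Alg n k D"
proof -
  obtain L where L: "\<forall>x\<in>set L. snd x \<in> Alg n k D" "\<forall>X. f X = (\<Sum>x\<leftarrow>L. rowmon k (fst x) (X d) * snd x X)"
    using NF[OF assms(4)] by blast
  define U where "U = {..<n} - D"
  have fU: "finite U" unfolding U_def by simp
  have dU: "d \<in> U" using assms unfolding U_def by simp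
  have cU: "card U > 0" using fU dU card_gt_0_iff by blast
  have fD: "finite D" using assms(3) finite_subset by blast
  have eq: "f X = (1 / real (card U)) * (\<Sum>x\<leftarrow>L. snd x X * ((\<Sum>u<n. rowmon k (fst x) (X u)) - (\<Sum>i\<in>D. rowmon k (fst x) (X i))))" for X
  proof -
    have "real (card U) * f X = (\<Sum>u\<in>U. f (permute_rows (transpose d u) X))"
      using inv unfolding U_def by simp
    also have "\<dots> = (\<Sum>u\<in>U. \<Sum>x\<leftarrow>L. rowmon k (fst x) (X u) * snd x X)"
    proof (rule sum.cong[OF refl])
      fix u assume u: "u \<in> U"
      have p: "transpose d u permutes {..<n}" using u dU unfolding U_def by (intro permutes_swap_id) auto
      have fx: "\<forall>i\<in>D. transpose d u i = i" using u assms(2) unfolding U_def by (metis DiffD2 transpose_apply_other)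
      have "snd x (permute_rows (transpose d u) X) = snd x X" if "x \<in> set L" for x
        using Alg_inv[OF _ p fx] L(1) that by blast
      then show "f (permute_rows (transpose d u) X) = (\<Sum>x\<leftarrow>L. rowmon k (fst x) (X u) * snd x X)"
        unfolding L(2)[rule_format] by (intro arg_cong[where f = sum_list] map_cong refl) (simp add: permute_rows_def)
    qed
    also have "\<dots> = (\<Sum>x\<leftarrow>L. \<Sum>u\<in>U. rowmon k (fst x) (X u) * snd x X)"
      by (rule sum_list_sum_swap)
    also have "\<dots> = (\<Sum>x\<leftarrow>L. snd x X * ((\<Sum>u<n. rowmon k (fst x) (X u)) - (\<Sum>i\<in>D. rowmon k (fst x) (X i))))"
    proof (intro arg_cong[where f = sum_list] map_cong refl)
      fix x :: "(nat \<Rightarrow> nat) \<times> ((nat \<Rightarrow> nat \<Rightarrow> real) \<Rightarrow> real)"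
      have "(\<Sum>u\<in>U. rowmon k (fst x) (X u)) = (\<Sum>u<n. rowmon k (fst x) (X u)) - (\<Sum>i\<in>D. rowmon k (fst x) (X i))"
        unfolding U_def using assms(3) by (intro sum_diff) auto
      then show "(\<Sum>u\<in>U. rowmon k (fst x) (X u) * snd x X) = snd x X * ((\<Sum>u<n. rowmon k (fst x) (X u)) - (\<Sum>i\<in>D. rowmon k (fst x) (X i)))"
        by (simp add: sum_distrib_left[symmetric] mult.commute)
    qed
    finally show ?thesis using cU by (simp add: field_simps)
  qed
  have "(\<lambda>X. (1 / real (card U)) * (\<Sum>x\<leftarrow>L. snd x X * ((\<Sum>u<n. rowmon k (fst x) (X u)) + (-1) * (\<Sum>i\<in>D. rowmon k (fst x) (X i))))) \<in> Alg n k D"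
  proof (intro Alg_mul[OF Alg_const] Alg_sum_list)
    fix x assume x: "x \<in> set L"
    show "(\<lambda>X. snd x X * ((\<Sum>u<n. rowmon k (fst x) (X u)) + (-1) * (\<Sum>i\<in>D. rowmon k (fst x) (X i)))) \<in> Alg n k D"
      using L(1) x fD by (intro Alg_mul Alg_add Alg_const Alg_sum Alg_rowmon Alg_sym[OF powsum_sympol]) auto
  qed
  moreover have "f = (\<lambda>X. (1 / real (card U)) * (\<Sum>x\<leftarrow>L. snd x X * ((\<Sum>u<n. rowmon k (fst x) (X u)) + (-1) * (\<Sum>i\<in>D. rowmon k (fst x) (X i)))))"
    using eq by (simp add: fun_eq_iff)
  ultimately show ?thesis by simp
qed



lemma W_sum_list: "(\<And>x. x \<in> set L \<Longrightarrow> F x \<in> Wset n k) \<Longrightarrow> (\<lambda>X. \<Sum>x\<leftarrow>L. F x X) \<in> Wset n k"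
proof (induction L)
  case Nil then show ?case using W_zero by simp
next
  case (Cons a L) then show ?case using W_add[of "F a" n k "\<lambda>X. \<Sum>x\<leftarrow>L. F x X"] by simp
qed

lemma W_rowmon: assumes "n \<ge> 1" shows "(\<lambda>X. rowmon k \<beta> (X 0)) \<in> Wset n k"
proof -
  have "(\<lambda>X. \<Prod>t\<in>Sigma {..<k} (\<lambda>j. {..<\<beta> j}). X 0 (fst t)) \<in> Wset n k"
    by (rule Rpp[OF assms]) auto
  moreover have "(\<Prod>t\<in>Sigma {..<k} (\<lambda>j. {..<\<beta> j}). X 0 (fst t)) = rowmon k \<beta> (X 0)" for X :: "nat \<Rightarrow> nat \<Rightarrow> real"
  proof -
    have "(\<Prod>t\<in>Sigma {..<k} (\<lambda>j. {..<\<beta> j}). X 0 (fst t)) = (\<Prod>j<k. \<Prod>l<\<beta> j. X 0 j)"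
      by (subst prod.Sigma) (auto simp: case_prod_beta)
    then show ?thesis unfolding rowmon_def by simp
  qed
  ultimately show ?thesis by simp
qed

theorem lemma2:
  fixes n k :: nat and p :: "(nat \<Rightarrow> nat \<Rightarrow> real) \<Rightarrow> real"
  assumes "n \<ge> 1"
    and "poly_fun n k p"
    and "row_perm_invariant {1..<n} p"
  shows "\<exists>q :: (nat \<Rightarrow> nat) \<Rightarrow> (nat \<Rightarrow> nat \<Rightarrow> real) \<Rightarrow> real.
           (\<forall>\<alpha>. poly_fun n k (q \<alpha>) \<and> row_perm_invariant {..<n} (q \<alpha>)) \<and>
           (\<forall>X. p X = (\<Sum>\<alpha>\<in>{\<alpha>. (\<forall>j\<ge>k. \<alpha> j = 0) \<and> (\<Sum>j<k. \<alpha> j) \<le> n}.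
                          (\<Prod>j<k. X 0 j ^ \<alpha> j) * q \<alpha> X))"
proof -
  obtain S c where S: "finite S" "\<And>X. p X = (\<Sum>A\<in>S. c A * monomial_mat n k A X)"
    using assms(2) unfolding poly_fun_def by blast
  have base: "p \<in> Alg n k {..<n}"
  proof -
    have "(\<lambda>X. \<Sum>A\<in>S. c A * monomial_mat n k A X) \<in> Alg n k {..<n}"
      unfolding monomial_mat_def
      by (intro Alg_sum Alg_mul Alg_const Alg_prod Alg_power Alg_var S(1)) auto
    moreover have "p = (\<lambda>X. \<Sum>A\<in>S. c A * monomial_mat n k A X)" using S(2) by (simp add: fun_eq_iff)
    ultimately show ?thesis by simp
  qed
  have iter: "j < n \<Longrightarrow> p \<in> Alg n k {..<n - j}" for j
  proof (induction j)
    case 0 then show ?case using base by simp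
  next
    case (Suc j)
    define m where "m = n - Suc j"
    have m1: "m \<ge> 1" "m < n" using Suc.prems unfolding m_def by auto
    have ins: "{..<n - j} = insert m {..<m}" using Suc.prems unfolding m_def by auto
    have "p \<in> Alg n k {..<m}"
    proof (rule Alg_step[of m n "{..<m}"])
      show "m < n" "m \<notin> {..<m}" "{..<m} \<subseteq> {..<n}" using m1 by auto
      show "p \<in> Alg n k (insert m {..<m})" using Suc ins by simp
      fix u X assume u: "u \<in> {..<n} - {..<m}"
      have "transpose m u permutes {1..<n}" using u m1 by (intro permutes_swap_id) auto
      then show "p (permute_rows (transpose m u) X) = p X"
        using assms(3) unfolding row_perm_invariant_def by blast
    qed
    then show ?case unfolding m_def by (simp add: Suc_diff_Suc Suc.prems)
  qed
  have "p \<in> Alg n k (insert 0 {})"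
    using iter[of "n - 1"] assms(1) by (simp add: lessThan_Suc)
  then obtain L where L: "\<forall>x\<in>set L. snd x \<in> Alg n k {}" "\<forall>X. p X = (\<Sum>x\<leftarrow>L. rowmon k (fst x) (X 0) * snd x X)"
    using NF by blast
  have "(\<lambda>X. \<Sum>x\<leftarrow>L. snd x X * rowmon k (fst x) (X 0)) \<in> Wset n k"
  proof (rule W_sum_list)
    fix x assume x: "x \<in> set L"
    then have a: "snd x \<in> Alg n k {}" using L(1) by blast
    have "sympol n k (snd x)"
      unfolding sympol_def row_perm_invariant_def
      using Alg_poly[OF a] Alg_inv[OF a] by auto
    then show "(\<lambda>X. snd x X * rowmon k (fst x) (X 0)) \<in> Wset n k"
      by (intro W_smul W_rowmon assms(1))
  qed
  moreover have "p = (\<lambda>X. \<Sum>x\<leftarrow>L. snd x X * rowmon k (fst x) (X 0))"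
    using L(2) by (simp add: fun_eq_iff mult.commute)
  ultimately have "p \<in> Wset n k" by simp
  then show ?thesis unfolding Wset_def Bnd_def sympol_def by blast
qed

end
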